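(* Let $d_1,d_2\in\mathbb{N}$ and let $X,Y\in\mathcal{M}_{d_1}\otimes\mathcal{M}_{d_1}$ be Hermitian operators such that there exists $\ket{\alpha}\in\mathbb{C}^{d_1}\otimes\mathbb{C}^{d_1}$ with $\bra{\alpha}X\ket{\alpha}=0$ and $\bra{\alpha}Y\ket{\alpha}>0$. Let \[ Z_{A_1B_1A_2B_2} = X_{A_1B_1}\otimes(\mathbb{1}-\omega)_{A_2B_2} + Y_{A_1B_1}\otimes \omega_{A_2B_2} \] on $\mathbb{C}^{d_1}\otimes\mathbb{C}^{d_1}\otimes\mathbb{C}^{d_2}\otimes\mathbb{C}^{d_2}$ (factors labelled $A_1,B_1,A_2,B_2$), where $\omega$ is the maximally entangled projector on $\mathbb{C}^{d_2}\otimes\mathbb{C}^{d_2}$. Then for any $d_2'\in\mathbb{N}$ and any linear map $\mathcal{L}:\mathcal{M}_{d_2}\to\mathcal{M}_{d_2'}$ that is not completely positive, \[ (\mathrm{id}_{A_1}\otimes\mathrm{id}_{B_1}\otimes\mathcal{L}_{A_2}\otimes\mathrm{id}_{B_2})(Z_{A_1B_1A_2B_2}) \] is not positive semidefinite.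
   Context: $\mathcal{M}_d$ denotes complex $d\times d$ matrices. $\omega=\ket{\Omega}\bra{\Omega}$ with $\ket{\Omega}=\frac{1}{\sqrt{d_2}}\sum_{i=1}^{d_2}\ket{i}\otimes\ket{i}$. A linear map $\mathcal{L}:\mathcal{M}_{d}\to\mathcal{M}_{d'}$ is completely positive if $\mathrm{id}_k\otimes\mathcal{L}$ maps positive semidefinite matrices to positive semidefinite matrices for every $k\in\mathbb{N}$. *)

theory Defs
  imports Complex_Main "HOL-Library.Complex_Order"
begin

text \<open>Complex matrices indexed by a finite index type: entries A i j.
  An operator on C^{d1} (x) C^{d1} (x) C^{d2} (x) C^{d2} is indexed by
  ((a1,b1),(a2,b2)), with factors A1,B1,A2,B2.\<close>

type_synonym 'i cmat = "'i \<Rightarrow> 'i \<Rightarrow> complex"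

definition hermitian :: "('i::finite) cmat \<Rightarrow> bool" where
  "hermitian A \<longleftrightarrow> (\<forall>i j. A j i = cnj (A i j))"

definition qform_on :: "'i set \<Rightarrow> 'i cmat \<Rightarrow> ('i \<Rightarrow> complex) \<Rightarrow> complex" where
  "qform_on S A v = (\<Sum>i\<in>S. \<Sum>j\<in>S. cnj (v i) * A i j * v j)"

abbreviation qform :: "('i::finite) cmat \<Rightarrow> ('i \<Rightarrow> complex) \<Rightarrow> complex" where
  "qform A v \<equiv> qform_on UNIV A v"

text \<open>Positive semidefinite on index set S (complex order: 0 \<le> z iff z real nonneg).\<close>
definition psd_on :: "'i set \<Rightarrow> 'i cmat \<Rightarrow> bool" where
  "psd_on S A \<longleftrightarrow> (\<forall>v. 0 \<le> qform_on S A v)"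

abbreviation psd :: "('i::finite) cmat \<Rightarrow> bool" where
  "psd A \<equiv> psd_on UNIV A"

definition idm :: "'i cmat" where
  "idm i j = (if i = j then 1 else 0)"

definition kron :: "'i cmat \<Rightarrow> 'j cmat \<Rightarrow> ('i \<times> 'j) cmat" where
  "kron A B = (\<lambda>(i,k) (j,l). A i j * B k l)"

definition Omega_vec :: "('b::finite \<times> 'b) \<Rightarrow> complex" where
  "Omega_vec = (\<lambda>(i,j). if i = j then complex_of_real (1 / sqrt (real (card (UNIV :: 'b set)))) else 0)"

definition omega :: "('b::finite \<times> 'b) cmat" where
  "omega p q = Omega_vec p * cnj (Omega_vec q)"

definition clinear_map :: "('b cmat \<Rightarrow> 'c cmat) \<Rightarrow> bool" where
  "clinear_map L \<longleftrightarrow>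
     (\<forall>A B. L (\<lambda>i j. A i j + B i j) = (\<lambda>i j. L A i j + L B i j)) \<and>
     (\<forall>c A. L (\<lambda>i j. c * A i j) = (\<lambda>i j. c * L A i j))"

text \<open>(id_k \<otimes> L)(A) for A on C^k (x) C^{d}, indices (n,r) with n < k.\<close>
definition id_tensor :: "('b cmat \<Rightarrow> 'c cmat) \<Rightarrow> (nat \<times> 'b) cmat \<Rightarrow> (nat \<times> 'c) cmat" where
  "id_tensor L A = (\<lambda>(i,p) (j,q). L (\<lambda>r s. A (i,r) (j,s)) p q)"

definition completely_positive :: "('b::finite cmat \<Rightarrow> 'c::finite cmat) \<Rightarrow> bool" where
  "completely_positive L \<longleftrightarrow>
     (\<forall>k::nat. \<forall>A. psd_on ({..<k} \<times> UNIV) A \<longrightarrow> psd_on ({..<k} \<times> UNIV) (id_tensor L A))"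

definition apply_A2 :: "('b cmat \<Rightarrow> 'c cmat) \<Rightarrow> (('a \<times> 'a) \<times> ('b \<times> 'b)) cmat
    \<Rightarrow> (('a \<times> 'a) \<times> ('c \<times> 'b)) cmat" where
  "apply_A2 L Z = (\<lambda>((a1,b1),(c,b2)) ((a1',b1'),(c',b2')).
      L (\<lambda>r s. Z ((a1,b1),(r,b2)) ((a1',b1'),(s,b2'))) c c')"

end

theory Submission
  imports Defs
begin


lemma sum_if_const: "(\<Sum>j\<in>S. if P then f j else 0) = (if P then (\<Sum>j\<in>S. f j) else (0::'a::comm_monoid_add))"
  by simp

lemma qform_two:
  assumes "finite S" "i \<in> S" "j \<in> S" "i \<noteq> j"
  shows "qform_on S A (\<lambda>k. if k = i then t else if k = j then s else 0) =
    cnj t*A i i*t + cnj t*A i j*s + cnj s*A j i*t + cnj s*A j j*s"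
proof -
  have v: "(\<lambda>k. if k = i then t else if k = j then s else 0) = (\<lambda>k. (if k = i then t else 0) + (if k = j then s else 0))"
    using assms by auto
  show ?thesis unfolding qform_on_def v
    using assms by (simp add: algebra_simps sum.distrib if_distrib[of cnj] if_distrib[where f="\<lambda>x. x * _"] if_distrib[where f="\<lambda>x. _ * x"] sum.delta sum.delta' sum_if_const cong: if_cong)
qed

lemma qform_one:
  assumes "finite S" "i \<in> S"
  shows "qform_on S A (\<lambda>k. if k = i then t else 0) = cnj t*A i i*t"
  unfolding qform_on_def
    using assms by (simp add: algebra_simps sum.distrib if_distrib[of cnj] if_distrib[where f="\<lambda>x. x * _"] if_distrib[where f="\<lambda>x. _ * x"] sum.delta sum.delta' sum_if_const cong: if_cong)

lemma psd_onD: "psd_on S A \<Longrightarrow> 0 \<le> qform_on S A v"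
  unfolding psd_on_def by simp

lemma cplx_nonneg: "(0::complex) \<le> z \<longleftrightarrow> 0 \<le> Re z \<and> Im z = 0"
  by (auto simp: less_eq_complex_def)

lemma psd_diag:
  assumes "psd_on S A" "finite S" "i \<in> S"
  shows "0 \<le> A i i"
  using psd_onD[OF assms(1), of "\<lambda>k. if k = i then 1 else 0"] qform_one[OF assms(2,3), of A 1] by simp

lemma psd_herm:
  assumes "psd_on S A" "finite S" "i \<in> S" "j \<in> S"
  shows "A j i = cnj (A i j)"
proof (cases "i = j")
  case True
  then show ?thesis using psd_diag[OF assms(1-3)] by (intro complex_eqI) (simp_all add: cplx_nonneg)
next
  case False
  have di: "Im (A i i) = 0" and dj: "Im (A j j) = 0"
    using psd_diag[OF assms(1,2)] assms(3,4) by (auto simp: cplx_nonneg)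
  have 1: "0 \<le> qform_on S A (\<lambda>k. if k = i then 1 else if k = j then 1 else 0)"
    using psd_onD[OF assms(1)] .
  have 2: "0 \<le> qform_on S A (\<lambda>k. if k = i then \<i> else if k = j then 1 else 0)"
    using psd_onD[OF assms(1)] .
  have a: "Im (A i i + A i j + A j i + A j j) = 0"
    using 1 unfolding qform_two[OF assms(2-4) False] by (simp add: cplx_nonneg)
  have b: "Im (cnj \<i> * A i i * \<i> + cnj \<i> * A i j + A j i * \<i> + A j j) = 0"
    using 2 unfolding qform_two[OF assms(2-4) False] by (simp add: cplx_nonneg)
  from a b di dj show ?thesis
    by (intro complex_eqI) simp_all
qed

lemma psd_zero_row:
  assumes "psd_on S A" "finite S" "i \<in> S" "j \<in> S" "A i i = 0"
  shows "A i j = 0"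
proof (rule ccontr)
  assume nz: "A i j \<noteq> 0"
  then have ij: "i \<noteq> j" using assms by auto
  have h: "A j i = cnj (A i j)" using psd_herm[OF assms(1-4)] .
  define n where "n = (cmod (A i j))^2"
  have n: "n > 0" using nz by (simp add: n_def)
  define x where "x = (Re (A j j) + 1) / (2 * n)"
  define t where "t = - complex_of_real x * A i j"
  have 1: "0 \<le> qform_on S A (\<lambda>k. if k = i then t else if k = j then 1 else 0)"
    using psd_onD[OF assms(1)] .
  have e: "cnj (A i j) * A i j = complex_of_real n"
    unfolding n_def by (simp add: complex_norm_square[symmetric] mult.commute)
  have c1: "cnj t * A i j = - (complex_of_real x * (cnj (A i j) * A i j))"
    by (simp add: t_def mult.assoc)
  have c2: "A j i * t = - (complex_of_real x * (cnj (A i j) * A i j))"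
    unfolding h t_def by (simp add: mult_ac)
  have q: "qform_on S A (\<lambda>k. if k = i then t else if k = j then 1 else 0) = A j j - 2 * complex_of_real x * complex_of_real n"
    unfolding qform_two[OF assms(2-4) ij] assms(5)
    using c1 c2 e by simp
  have x2: "2 * x * n = Re (A j j) + 1" using n by (simp add: x_def)
  have "Re (A j j - 2 * complex_of_real x * complex_of_real n) = -1"
    using x2 by simp
  with 1 q show False by (simp add: cplx_nonneg)
qed

lemma qform_insert:
  assumes "finite T" "x \<notin> T"
  shows "qform_on (insert x T) A v = cnj (v x) * A x x * v x + cnj (v x) * (\<Sum>j\<in>T. A x j * v j)
     + (\<Sum>i\<in>T. cnj (v i) * A i x) * v x + qform_on T A v"
  using assms unfolding qform_on_def
  by (simp add: sum.distrib sum_distrib_left sum_distrib_right algebra_simps)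

lemma qform_cong:
  assumes "\<And>i. i \<in> T \<Longrightarrow> v i = w i"
  shows "qform_on T A v = qform_on T A w"
  using assms unfolding qform_on_def by (intro sum.cong refl) auto

lemma psd_decomp:
  assumes "finite S" "psd_on S A"
  shows "\<exists>(n::nat) V. \<forall>i\<in>S. \<forall>j\<in>S. A i j = (\<Sum>m<n. V m i * cnj (V m j))"
  using assms
proof (induction S arbitrary: A rule: finite_induct)
  case empty
  then show ?case by auto
next
  case (insert x T)
  let ?S = "insert x T"
  have fS: "finite ?S" using insert by simp
  have herm: "\<And>i j. i \<in> ?S \<Longrightarrow> j \<in> ?S \<Longrightarrow> A j i = cnj (A i j)"
    using psd_herm[OF insert(4) fS] by blast
  show ?case
  proof (cases "A x x = 0")
    case True
    have row: "\<And>j. j \<in> ?S \<Longrightarrow> A x j = 0"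
      using psd_zero_row[OF insert(4) fS _ _ True] by blast
    have col: "\<And>j. j \<in> ?S \<Longrightarrow> A j x = 0"
    proof -
      fix j assume j: "j \<in> ?S"
      have "A j x = cnj (A x j)" using herm[of x j] j by simp
      then show "A j x = 0" using row[OF j] by simp
    qed
    have "psd_on T A"
      unfolding psd_on_def
    proof
      fix v
      have "qform_on ?S A (v(x:=0)) = qform_on T A (v(x:=0))"
        using qform_insert[OF insert(1,2), of A "v(x:=0)"] by simp
      also have "\<dots> = qform_on T A v" using insert(2) by (intro qform_cong) auto
      finally show "0 \<le> qform_on T A v" using psd_onD[OF insert(4), of "v(x:=0)"] by simp
    qed
    from insert(3)[OF this] obtain n :: nat and V where V: "\<forall>i\<in>T. \<forall>j\<in>T. A i j = (\<Sum>m<n. V m i * cnj (V m j))"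
      by blast
    define V' where "V' m = (V m)(x := 0)" for m
    have "\<forall>i\<in>?S. \<forall>j\<in>?S. A i j = (\<Sum>m<n. V' m i * cnj (V' m j))"
    proof (intro ballI)
      fix i j assume i: "i \<in> ?S" and j: "j \<in> ?S"
      show "A i j = (\<Sum>m<n. V' m i * cnj (V' m j))"
      proof (cases "i = x \<or> j = x")
        case True
        then show ?thesis using row col i j by (auto simp: V'_def)
      next
        case False
        then show ?thesis using V i j by (auto simp: V'_def)
      qed
    qed
    then show ?thesis by blast
  next
    case False
    define r where "r = Re (A x x)"
    have a: "A x x = complex_of_real r" using psd_diag[OF insert(4) fS] unfolding r_def
      by (intro complex_eqI) (auto simp: cplx_nonneg)
    have r: "r > 0"
    proof -
      have "0 \<le> r" using psd_diag[OF insert(4) fS, of x] unfolding r_def by (simp add: cplx_nonneg)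
      moreover have "r \<noteq> 0" using False a by auto
      ultimately show ?thesis by simp
    qed
    define B where "B i j = A i j - A i x * A x j / A x x" for i j
    have "psd_on T B"
      unfolding psd_on_def
    proof
      fix v
      define \<beta> where "\<beta> = (\<Sum>j\<in>T. A x j * v j)"
      define \<gamma> where "\<gamma> = (\<Sum>i\<in>T. cnj (v i) * A i x)"
      define v' where "v' = v(x := - \<beta> / A x x)"
      have e1: "(\<Sum>j\<in>T. A x j * v' j) = \<beta>" unfolding \<beta>_def v'_def using insert(2)
        by (intro sum.cong) auto
      have e2: "(\<Sum>i\<in>T. cnj (v' i) * A i x) = \<gamma>" unfolding \<gamma>_def v'_def using insert(2)
        by (intro sum.cong) auto
      have e3: "qform_on T A v' = qform_on T A v" unfolding v'_def using insert(2)
        by (intro qform_cong) auto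
      have "qform_on ?S A v' = qform_on T A v - \<gamma> * \<beta> / A x x"
        unfolding qform_insert[OF insert(1,2)] e1 e2 e3
        using r by (simp add: v'_def a field_simps)
      also have "\<dots> = qform_on T B v"
        unfolding B_def qform_on_def \<gamma>_def \<beta>_def
        by (simp add: sum_subtractf sum_distrib_left sum_distrib_right sum_divide_distrib algebra_simps)
      finally show "0 \<le> qform_on T B v" using psd_onD[OF insert(4), of v'] by simp
    qed
    from insert(3)[OF this] obtain n :: nat and V where V: "\<forall>i\<in>T. \<forall>j\<in>T. B i j = (\<Sum>m<n. V m i * cnj (V m j))"
      by blast
    define u where "u i = A i x / complex_of_real (sqrt r)" for i
    define V' where "V' m = (if m < n then (V m)(x := 0) else u)" for m
    have "\<forall>i\<in>?S. \<forall>j\<in>?S. A i j = (\<Sum>m<Suc n. V' m i * cnj (V' m j))"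
    proof (intro ballI)
      fix i j assume i: "i \<in> ?S" and j: "j \<in> ?S"
      have s: "(\<Sum>m<Suc n. V' m i * cnj (V' m j)) = (\<Sum>m<n. ((V m)(x:=0)) i * cnj (((V m)(x:=0)) j)) + u i * cnj (u j)"
      proof -
        have "(\<Sum>m<Suc n. V' m i * cnj (V' m j)) = (\<Sum>m<n. V' m i * cnj (V' m j)) + V' n i * cnj (V' n j)"
          by (rule sum.lessThan_Suc)
        moreover have "(\<Sum>m<n. V' m i * cnj (V' m j)) = (\<Sum>m<n. ((V m)(x:=0)) i * cnj (((V m)(x:=0)) j))"
          by (rule sum.cong) (auto simp: V'_def)
        moreover have "V' n = u" by (simp add: V'_def)
        ultimately show ?thesis by simp
      qed
      have sq: "complex_of_real (sqrt r) * complex_of_real (sqrt r) = complex_of_real r"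
        proof -
          have "sqrt r * sqrt r = r" using r by simp
          then show ?thesis by (metis of_real_mult)
        qed
      have hx: "A x j = cnj (A j x)" using herm[OF j, of x] by simp
      have cs: "cnj (complex_of_real (sqrt r)) = complex_of_real (sqrt r)" by simp
      have uu: "u i * cnj (u j) = A i x * A x j / A x x"
      proof -
        have "u i * cnj (u j) = A i x / complex_of_real (sqrt r) * (A x j / complex_of_real (sqrt r))"
          unfolding u_def complex_cnj_divide cs hx by simp
        also have "\<dots> = A i x * A x j / (complex_of_real (sqrt r) * complex_of_real (sqrt r))"
          by simp
        finally show ?thesis unfolding sq a .
      qed
      show "A i j = (\<Sum>m<Suc n. V' m i * cnj (V' m j))"
      proof (cases "i = x \<or> j = x")
        case True
        then have "(\<Sum>m<n. ((V m)(x:=0)) i * cnj (((V m)(x:=0)) j)) = 0" by auto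
        moreover have "A i j = A i x * A x j / A x x"
        proof (cases "i = x")
          case True
          then show ?thesis using False by simp
        next
          case F2: False
          then have "j = x" using \<open>i = x \<or> j = x\<close> by simp
          then show ?thesis using False by simp
        qed
        ultimately show ?thesis using s uu by simp
      next
        case F: False
        then have "(\<Sum>m<n. ((V m)(x:=0)) i * cnj (((V m)(x:=0)) j)) = B i j" using V i j by auto
        then show ?thesis using s uu unfolding B_def by simp
      qed
    qed
    then show ?thesis by blast
  qed
qed


lemma sum_prod_split: "(\<Sum>x\<in>A\<times>B. f x) = (\<Sum>a\<in>A. \<Sum>b\<in>B. f (a,b))"
  by (simp add: sum.cartesian_product)

lemma sum_UNIV_prod: "(\<Sum>x\<in>(UNIV::('x\<times>'y) set). f x) = (\<Sum>a\<in>UNIV. \<Sum>b\<in>UNIV. f (a,b))"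
  by (metis UNIV_Times_UNIV sum_prod_split)


definition Emat :: "'b \<Rightarrow> 'b \<Rightarrow> 'b cmat" where
  "Emat r s = (\<lambda>i j. if i = r then if j = s then 1 else 0 else 0)"

lemma L_add: "clinear_map L \<Longrightarrow> L (\<lambda>i j. A i j + B i j) p q = L A p q + L B p q"
  unfolding clinear_map_def by metis

lemma L_scale: "clinear_map L \<Longrightarrow> L (\<lambda>i j. c * A i j) p q = c * L A p q"
  unfolding clinear_map_def by metis

lemma L_zero: "clinear_map L \<Longrightarrow> L (\<lambda>i j. 0) p q = 0"
  using L_scale[of L 0 "\<lambda>i j. 0" p q] by simp

lemma L_sum:
  assumes "clinear_map L" "finite M"
  shows "L (\<lambda>r s. \<Sum>m\<in>M. f m r s) p q = (\<Sum>m\<in>M. L (f m) p q)"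
  using assms(2)
proof (induction M rule: finite_induct)
  case empty
  then show ?case using L_zero[OF assms(1)] by simp
next
  case (insert x F)
  have "L (\<lambda>r s. \<Sum>m\<in>insert x F. f m r s) p q = L (\<lambda>r s. f x r s + (\<Sum>m\<in>F. f m r s)) p q"
    using insert by simp
  also have "\<dots> = L (f x) p q + L (\<lambda>r s. \<Sum>m\<in>F. f m r s) p q"
    using L_add[OF assms(1), of "f x" "\<lambda>r s. \<Sum>m\<in>F. f m r s"] by simp
  finally show ?case using insert by simp
qed

lemma L_expand:
  fixes L :: "('b::finite) cmat \<Rightarrow> 'c cmat"
  assumes "clinear_map L"
  shows "L A p q = (\<Sum>r\<in>UNIV. \<Sum>s\<in>UNIV. A r s * L (Emat r s) p q)"
proof -
  have A: "A = (\<lambda>i j. \<Sum>r\<in>UNIV. \<Sum>s\<in>UNIV. A r s * Emat r s i j)"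
    by (intro ext) (simp add: Emat_def if_distrib[where f="\<lambda>x. _ * x"] sum_if_const cong: if_cong)
  have "L A p q = L (\<lambda>i j. \<Sum>r\<in>UNIV. \<Sum>s\<in>UNIV. A r s * Emat r s i j) p q"
    by (subst A) (rule refl)
  also have "\<dots> = (\<Sum>r\<in>UNIV. L (\<lambda>i j. \<Sum>s\<in>UNIV. A r s * Emat r s i j) p q)"
    by (rule L_sum[OF assms]) simp
  also have "\<dots> = (\<Sum>r\<in>UNIV. \<Sum>s\<in>UNIV. L (\<lambda>i j. A r s * Emat r s i j) p q)"
    by (intro sum.cong refl L_sum[OF assms]) simp
  also have "\<dots> = (\<Sum>r\<in>UNIV. \<Sum>s\<in>UNIV. A r s * L (Emat r s) p q)"
    by (intro sum.cong refl L_scale[OF assms])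
  finally show ?thesis .
qed

lemma qform_sum:
  assumes "finite M"
  shows "qform_on S (\<lambda>P Q. \<Sum>m\<in>M. F m P Q) w = (\<Sum>m\<in>M. qform_on S (F m) w)"
  using assms
proof (induction M rule: finite_induct)
  case empty then show ?case by (simp add: qform_on_def)
next
  case (insert x F)
  then show ?case by (simp add: qform_on_def algebra_simps sum.distrib)
qed

lemma qform_scale: "qform_on S (\<lambda>P Q. c * F P Q) w = c * qform_on S F w"
  by (simp add: qform_on_def sum_distrib_left mult_ac)

lemma qform_cong_mat:
  assumes "\<And>P Q. P \<in> S \<Longrightarrow> Q \<in> S \<Longrightarrow> A P Q = B P Q"
  shows "qform_on S A w = qform_on S B w"
  unfolding qform_on_def using assms by (intro sum.cong refl) auto

lemma cpos_mult: "(0::complex) < c \<Longrightarrow> 0 \<le> c * z \<Longrightarrow> 0 \<le> z"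
  by (auto simp: less_eq_complex_def less_complex_def zero_le_mult_iff)

lemma contract:
  fixes W :: "('p::finite \<times> 'q::finite) cmat"
  shows "qform W (\<lambda>(p,x). \<alpha> p * y x) = qform (\<lambda>x x'. \<Sum>p\<in>UNIV. \<Sum>p'\<in>UNIV. cnj (\<alpha> p) * W (p,x) (p',x') * \<alpha> p') y"
  unfolding qform_on_def sum_UNIV_prod
  by (simp add: sum_distrib_left sum_distrib_right mult_ac
     sum.swap[where A="UNIV::'p set" and B="UNIV::'q set"])

lemma rank1:
  fixes K :: "('c::finite \<times> 'b::finite) cmat" and v :: "nat \<times> 'b \<Rightarrow> complex"
  shows "qform_on ({..<k}\<times>UNIV) (\<lambda>(i,p) (j,q). \<Sum>r\<in>UNIV. \<Sum>s\<in>UNIV. v (i,r) * cnj (v (j,s)) * K (p,r) (q,s)) w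
    = qform K (\<lambda>(p,r). \<Sum>i<k. w (i,p) * cnj (v (i,r)))"
  unfolding qform_on_def sum_prod_split sum_UNIV_prod
  by (simp add: sum_distrib_left sum_distrib_right mult_ac
     sum.swap[where A="{..<k}" and B="UNIV::'c set"] sum.swap[where A="{..<k}" and B="UNIV::'b set"]
     sum.swap[where A="UNIV::'c set" and B="UNIV::'b set"])

lemma choi_cp:
  fixes L :: "('b::finite) cmat \<Rightarrow> ('c::finite) cmat"
  assumes lin: "clinear_map L"
    and K: "psd (\<lambda>(c,b) (c',b'). L (Emat b b') c c')"
  shows "completely_positive L"
  unfolding completely_positive_def
proof (intro allI impI)
  fix k :: nat and A :: "(nat \<times> 'b) cmat"
  define S where "S = {..<k} \<times> (UNIV :: 'b set)"
  assume "psd_on ({..<k} \<times> UNIV) A"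
  then have pA: "psd_on S A" unfolding S_def .
  have fS: "finite S" unfolding S_def by simp
  obtain n :: nat and V where V: "\<forall>i\<in>S. \<forall>j\<in>S. A i j = (\<Sum>m<n. V m i * cnj (V m j))"
    using psd_decomp[OF fS pA] by blast
  define S2 where "S2 = {..<k} \<times> (UNIV :: 'c set)"
  define KK where "KK = (\<lambda>(c,b) (c',b'). L (Emat b b') c c')"
  define R where "R m = (\<lambda>(i,p) (j,q). \<Sum>r\<in>UNIV. \<Sum>s\<in>UNIV. V m (i,r) * cnj (V m (j,s)) * KK (p,r) (q,s))" for m
  have eq: "id_tensor L A P Q = (\<Sum>m<n. R m P Q)" if P: "P \<in> S2" and Q: "Q \<in> S2" for P Q
  proof -
    obtain i p where Pi: "P = (i,p)" by (cases P)
    obtain j q where Qj: "Q = (j,q)" by (cases Q)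
    have ik: "i < k" and jk: "j < k" using P Q Pi Qj unfolding S2_def by auto
    have "(\<lambda>r s. A (i,r) (j,s)) = (\<lambda>r s. \<Sum>m<n. V m (i,r) * cnj (V m (j,s)))"
      using V ik jk unfolding S_def by auto
    then have "id_tensor L A P Q = L (\<lambda>r s. \<Sum>m<n. V m (i,r) * cnj (V m (j,s))) p q"
      unfolding id_tensor_def Pi Qj by simp
    also have "\<dots> = (\<Sum>m<n. L (\<lambda>r s. V m (i,r) * cnj (V m (j,s))) p q)"
      by (rule L_sum[OF lin]) simp
    also have "\<dots> = (\<Sum>m<n. R m P Q)"
      unfolding R_def Pi Qj KK_def
      by (intro sum.cong refl, subst L_expand[OF lin]) simp
    finally show ?thesis .
  qed
  show "psd_on ({..<k} \<times> UNIV) (id_tensor L A)"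
    unfolding psd_on_def S2_def[symmetric]
  proof
    fix w
    have "qform_on S2 (id_tensor L A) w = qform_on S2 (\<lambda>P Q. \<Sum>m<n. R m P Q) w"
      using eq by (rule qform_cong_mat)
    also have "\<dots> = (\<Sum>m<n. qform_on S2 (R m) w)"
      by (rule qform_sum) simp
    also have "\<dots> = (\<Sum>m<n. qform KK (\<lambda>(p,r). \<Sum>i<k. w (i,p) * cnj (V m (i,r))))"
      unfolding S2_def R_def by (intro sum.cong refl rank1)
    finally show "0 \<le> qform_on S2 (id_tensor L A) w"
      using K unfolding KK_def[symmetric] by (simp add: psd_onD sum_nonneg)
  qed
qed


lemma gen_contract:
  fixes X Y :: "('p::finite) cmat" and Dm Om Em :: "'r::finite \<Rightarrow> 'r \<Rightarrow> complex"
  shows "(\<Sum>p\<in>UNIV. \<Sum>p'\<in>UNIV. cnj (\<alpha> p) * (\<Sum>r\<in>UNIV. \<Sum>s\<in>UNIV. (X p p' * Dm r s + Y p p' * Om r s) * Em r s) * \<alpha> p')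
    = (\<Sum>r\<in>UNIV. \<Sum>s\<in>UNIV. (qform X \<alpha> * Dm r s + qform Y \<alpha> * Om r s) * Em r s)"
  unfolding qform_on_def
  by (simp add: sum_distrib_left sum_distrib_right sum.distrib algebra_simps
     sum.swap[where A="UNIV::'p set" and B="UNIV::'r set"])

theorem lemma2:
  fixes X Y :: "('a::finite \<times> 'a) cmat"
    and L :: "('b::finite) cmat \<Rightarrow> ('c::finite) cmat"
  assumes "hermitian X" and "hermitian Y"
    and "\<exists>\<alpha>. qform X \<alpha> = 0 \<and> qform Y \<alpha> > 0"
    and "clinear_map L"
    and "\<not> completely_positive L"
  shows "\<not> psd (apply_A2 L (\<lambda>p q. kron X (\<lambda>u w. idm u w - omega u w) p q + kron Y omega p q))"
proof
  let ?Z = "\<lambda>p q. kron X (\<lambda>u w. idm u w - omega u w) p q + kron Y omega p q"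
  let ?W = "apply_A2 L ?Z"
  assume W: "psd ?W"
  from assms(3) obtain \<alpha> where qX: "qform X \<alpha> = 0" and qY: "qform Y \<alpha> > 0" by blast
  define t where "t = 1 / sqrt (real (card (UNIV :: 'b set)))"
  define \<rho> where "\<rho> = complex_of_real t"
  have t: "t > 0" unfolding t_def by (simp add: finite_UNIV_card_ge_0)
  have om: "omega (r,b) (s,b') = (if r = b then \<rho> else 0) * (if s = b' then \<rho> else 0)" for r b s b' :: 'b
    unfolding omega_def Omega_vec_def \<rho>_def t_def by simp
  have key: "(\<Sum>p\<in>UNIV. \<Sum>p'\<in>UNIV. cnj (\<alpha> p) * ?W (p,(c,b)) (p',(c',b')) * \<alpha> p')
     = (qform Y \<alpha> * (\<rho> * \<rho>)) * L (Emat b b') c c'" for c c' and b b'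
  proof -
    have "?W (p,(c,b)) (p',(c',b')) = (\<Sum>r\<in>UNIV. \<Sum>s\<in>UNIV.
        (X p p' * (idm (r,b) (s,b') - omega (r,b) (s,b')) + Y p p' * omega (r,b) (s,b')) * L (Emat r s) c c')" for p p'
      unfolding apply_A2_def by (simp, rule trans[OF L_expand[OF assms(4)]], simp add: kron_def)
    then have "(\<Sum>p\<in>UNIV. \<Sum>p'\<in>UNIV. cnj (\<alpha> p) * ?W (p,(c,b)) (p',(c',b')) * \<alpha> p')
       = (\<Sum>r\<in>UNIV. \<Sum>s\<in>UNIV. (qform X \<alpha> * (idm (r,b) (s,b') - omega (r,b) (s,b')) + qform Y \<alpha> * omega (r,b) (s,b')) * L (Emat r s) c c')"
      by (simp only: gen_contract)
    also have "\<dots> = (\<Sum>r\<in>UNIV. \<Sum>s\<in>UNIV. qform Y \<alpha> * ((if r = b then \<rho> else 0) * (if s = b' then \<rho> else 0)) * L (Emat r s) c c')"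
      unfolding qX om by simp
    also have "\<dots> = (qform Y \<alpha> * (\<rho> * \<rho>)) * L (Emat b b') c c'"
      by (simp add: if_distrib[where f="\<lambda>x. _ * x"] if_distrib[where f="\<lambda>x. x * _"] sum_if_const cong: if_cong)
    finally show ?thesis .
  qed
  define KK where "KK = (\<lambda>(c,b) (c',b'). L (Emat b b') c c')"
  have pos: "0 < qform Y \<alpha> * (\<rho> * \<rho>)"
    using qY t unfolding \<rho>_def by (simp add: less_complex_def)
  have "psd KK"
    unfolding psd_on_def
  proof
    fix y :: "'c \<times> 'b \<Rightarrow> complex"
    have "0 \<le> qform ?W (\<lambda>(p,x). \<alpha> p * y x)" by (rule psd_onD[OF W])
    also have "qform ?W (\<lambda>(p,x). \<alpha> p * y x) = qform (\<lambda>x x'. \<Sum>p\<in>UNIV. \<Sum>p'\<in>UNIV. cnj (\<alpha> p) * ?W (p,x) (p',x') * \<alpha> p') y"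
      by (rule contract)
    also have "\<dots> = qform (\<lambda>x x'. (qform Y \<alpha> * (\<rho> * \<rho>)) * KK x x') y"
      by (rule qform_cong_mat) (auto simp: KK_def key)
    also have "\<dots> = (qform Y \<alpha> * (\<rho> * \<rho>)) * qform KK y"
      by (rule qform_scale)
    finally show "0 \<le> qform KK y" using cpos_mult[OF pos] by blast
  qed
  then have "completely_positive L"
    unfolding KK_def by (rule choi_cp[OF assms(4)])
  with assms(5) show False by blast
qed

end
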